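(* Let $\tau,\ell,s$ be positive integers with $s\le\ell$ and $\tau+\ell m_{\mathrm H}<sn$. If Problem 1 (with parameters $s,\ell$) has a solution of degree $\tau$, then it has at least $(q^2)^{\delta(\tau)-1}$ solutions of degree $\tau$, where $$\delta(\tau)=(\tau+1)C_{\le\ell}-n\big[W_{<s}+sC_{\le\ell}-sC_{<s}\big]+m_{\mathrm H}W_{\le\ell}-gC_{\le\ell}.$$
   Context: Let $q$ be a prime power; the Hermitian curve over $\mathbb{F}_{q^2}$ has affine equation $Y^q+Y=X^{q+1}$, genus $g=\tfrac12q(q-1)$, affine rational points $P_1,\dots,P_n$ ($n=q^3$) and point at infinity $P_\infty$. $\mathcal{R}=\bigcup_{m\ge0}\mathcal{L}(mP_\infty)=\mathbb{F}_{q^2}[X,Y]/(Y^q+Y-X^{q+1})$ with basis $\{X^iY^j:i\ge0,0\le j<q\}$; $\deg_{\mathcal{H}}f=-v_{P_\infty}(f)$, so $\deg_{\mathcal{H}}(X^iY^j)=iq+j(q+1)$; $f\ne0$ is monic if the coefficient of its basis monomial of largest $\deg_{\mathcal{H}}$ is $1$. Fix integers $h\ge1$ and $m_{\mathrm H}$ with $2(g-1)<m_{\mathrm H}<n$. Given a received word $\mathbf{r}=(r_{i,j})\in\mathbb{F}_{q^2}^{h\times n}$, let $\mathbf{R}=(R_1,\dots,R_h)$, $R_i\in\mathcal{R}$, $\deg_{\mathcal{H}}R_i<n+2g$, $R_i(P_j)=r_{i,j}$; $G=X^{q^2}-X$. For $\mathbf{i},\mathbf{j}\in\mathbb{Z}_{\ge0}^h$: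 $|\mathbf{i}|=\sum_\mu i_\mu$, $\mathbf{i}\preceq\mathbf{j}$ componentwise, $\mathbf{a}^{\mathbf{i}}=\prod_\mu a_\mu^{i_\mu}$, $\binom{\mathbf{j}}{\mathbf{i}}=\prod_\mu\binom{j_\mu}{i_\mu}$. Problem 1: $\mathcal{I}=\{\mathbf{i}:|\mathbf{i}|<s\}$, $\mathcal{J}=\{\mathbf{j}:1\le|\mathbf{j}|\le\ell\}$, $A_{\mathbf{i},\mathbf{j}}=\binom{\mathbf{j}}{\mathbf{i}}\mathbf{R}^{\mathbf{j}-\mathbf{i}}G^{|\mathbf{i}|}$ ($=0$ if $\mathbf{i}\not\preceq\mathbf{j}$). A solution is a family $\lambda_{\mathbf{i}},\psi_{\mathbf{j}}\in\mathcal{R}$ with $\lambda_{\mathbf{0}}$ monic, $\psi_{\mathbf{j}}=\sum_{\mathbf{i}\in\mathcal{I}}\lambda_{\mathbf{i}}A_{\mathbf{i},\mathbf{j}}$ for $|\mathbf{j}|<s$, $\psi_{\mathbf{j}}\equiv\sum_{\mathbf{i}\in\mathcal{I}}\lambda_{\mathbf{i}}A_{\mathbf{i},\mathbf{j}}\bmod G^s$ for $|\mathbf{j}|\ge s$, $\deg_{\mathcal{H}}\lambda_{\mathbf{0}}\ge\deg_{\mathcal{H}}\lambda_{\mathbf{i}}-|\mathbf{i}|(2g-1)$ for all $\mathbf{i}\in\mathcal{I}$, and $\deg_{\mathcal{H}}\lambda_{\mathbf{0}}\ge\deg_{\mathcal{H}}\psi_{\mathbf{j}}-|\mathbf{j}|m_{\mathrm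 H}$ for all $\mathbf{j}\in\mathcal{J}$; its degree is $\deg_{\mathcal{H}}\lambda_{\mathbf{0}}$. Counting quantities: $C_{\le\ell}=\#\{\mathbf{j}\in\mathbb{Z}_{\ge0}^h:|\mathbf{j}|\le\ell\}$, $C_{<s}=\#\{\mathbf{i}\in\mathbb{Z}_{\ge0}^h:|\mathbf{i}|<s\}$, $W_{<s}=\sum_{|\mathbf{i}|<s}|\mathbf{i}|$, $W_{\le\ell}=\sum_{|\mathbf{j}|\le\ell}|\mathbf{j}|$ (sums over $\mathbb{Z}_{\ge0}^h$). *)

theory Defs
  imports "HOL-Computational_Algebra.Polynomial" "HOL-Computational_Algebra.Primes"
begin

text \<open>The coordinate ring R = F[X,Y]/(Y^q+Y-X^(q+1)) is represented inside the
bivariate polynomial ring 'a poly poly (outer variable Y, coefficients polynomials in X).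
Elements of R are the canonical representatives of Y-degree < q, i.e. linear
combinations of the basis X^i Y^j (0 <= j < q); equality in R is congruence
modulo the curve polynomial.\<close>

definition hcurve :: "nat \<Rightarrow> 'a::comm_ring_1 poly poly" where
  "hcurve q = monom 1 q + monom 1 1 - monom (monom 1 (q + 1)) 0"

definition inR :: "nat \<Rightarrow> 'a::comm_ring_1 poly poly \<Rightarrow> bool" where
  "inR q f \<longleftrightarrow> degree f < q"

definition eqR :: "nat \<Rightarrow> 'a::comm_ring_1 poly poly \<Rightarrow> 'a poly poly \<Rightarrow> bool" where
  "eqR q f g \<longleftrightarrow> hcurve q dvd (f - g)"

definition suppH :: "nat \<Rightarrow> 'a::comm_ring_1 poly poly \<Rightarrow> (nat \<times> nat) set" where
  "suppH q f = {(i, j). j < q \<and> coeff (coeff f j) i \<noteq> 0}"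

definition degH :: "nat \<Rightarrow> 'a::comm_ring_1 poly poly \<Rightarrow> nat" where
  "degH q f = Max ((\<lambda>(i, j). i * q + j * (q + 1)) ` suppH q f)"

definition monicH :: "nat \<Rightarrow> 'a::comm_ring_1 poly poly \<Rightarrow> bool" where
  "monicH q f \<longleftrightarrow> f \<noteq> 0 \<and>
     (\<forall>(i, j) \<in> suppH q f. i * q + j * (q + 1) = degH q f \<longrightarrow> coeff (coeff f j) i = 1)"

definition evalR :: "'a::comm_ring_1 poly poly \<Rightarrow> 'a \<Rightarrow> 'a \<Rightarrow> 'a" where
  "evalR f x y = poly (poly f [:y:]) x"

definition Gpol :: "nat \<Rightarrow> 'a::comm_ring_1 poly poly" where
  "Gpol q = [: monom 1 (q ^ 2) - monom 1 1 :]"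

definition genusH :: "nat \<Rightarrow> nat" where
  "genusH q = q * (q - 1) div 2"

definition hermitian_points :: "nat \<Rightarrow> ('a::comm_ring_1 \<times> 'a) set" where
  "hermitian_points q = {(x, y). y ^ q + y = x ^ (q + 1)}"

text \<open>Multi-indices in Z_{>=0}^h are lists of length h.\<close>
definition preceq :: "nat list \<Rightarrow> nat list \<Rightarrow> bool" where
  "preceq i j \<longleftrightarrow> length i = length j \<and> (\<forall>\<mu> < length i. i ! \<mu> \<le> j ! \<mu>)"

definition binomv :: "nat list \<Rightarrow> nat list \<Rightarrow> nat" where
  "binomv i j = (\<Prod>\<mu> < length j. (j ! \<mu>) choose (i ! \<mu>))"

definition Rpowv :: "(nat \<Rightarrow> 'a::comm_ring_1 poly poly) \<Rightarrow> nat list \<Rightarrow> nat list \<Rightarrow> 'a poly poly" where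
  "Rpowv Rv i j = (\<Prod>\<mu> < length j. Rv \<mu> ^ (j ! \<mu> - i ! \<mu>))"

definition Aent :: "nat \<Rightarrow> (nat \<Rightarrow> 'a::comm_ring_1 poly poly) \<Rightarrow> nat list \<Rightarrow> nat list \<Rightarrow> 'a poly poly" where
  "Aent q Rv i j = (if preceq i j
      then of_nat (binomv i j) * Rpowv Rv i j * Gpol q ^ sum_list i else 0)"

definition Iset :: "nat \<Rightarrow> nat \<Rightarrow> nat list set" where
  "Iset h s = {i. length i = h \<and> sum_list i < s}"

definition Jset :: "nat \<Rightarrow> nat \<Rightarrow> nat list set" where
  "Jset h l = {j. length j = h \<and> 1 \<le> sum_list j \<and> sum_list j \<le> l}"

definition combo :: "nat \<Rightarrow> nat \<Rightarrow> nat \<Rightarrow> (nat \<Rightarrow> 'a::comm_ring_1 poly poly)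
    \<Rightarrow> (nat list \<Rightarrow> 'a poly poly) \<Rightarrow> nat list \<Rightarrow> 'a poly poly" where
  "combo q h s Rv lam j = (\<Sum>i \<in> Iset h s. lam i * Aent q Rv i j)"

text \<open>A solution of Problem 1: families lambda (on I) and psi (on J) of elements of R,
extended by 0 outside their index sets.\<close>
definition is_solution :: "nat \<Rightarrow> nat \<Rightarrow> nat \<Rightarrow> nat \<Rightarrow> int \<Rightarrow> (nat \<Rightarrow> 'a::comm_ring_1 poly poly)
    \<Rightarrow> (nat list \<Rightarrow> 'a poly poly) \<Rightarrow> (nat list \<Rightarrow> 'a poly poly) \<Rightarrow> bool" where
  "is_solution q h s l mH Rv lam psi \<longleftrightarrow>
     (\<forall>i. i \<notin> Iset h s \<longrightarrow> lam i = 0) \<and>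
     (\<forall>j. j \<notin> Jset h l \<longrightarrow> psi j = 0) \<and>
     (\<forall>i \<in> Iset h s. inR q (lam i)) \<and>
     (\<forall>j \<in> Jset h l. inR q (psi j)) \<and>
     monicH q (lam (replicate h 0)) \<and>
     (\<forall>j \<in> Jset h l. sum_list j < s \<longrightarrow> eqR q (psi j) (combo q h s Rv lam j)) \<and>
     (\<forall>j \<in> Jset h l. s \<le> sum_list j \<longrightarrow>
        (\<exists>t. eqR q (psi j) (combo q h s Rv lam j + t * Gpol q ^ s))) \<and>
     (\<forall>i \<in> Iset h s. lam i \<noteq> 0 \<longrightarrow>
        int (degH q (lam i)) - int (sum_list i) * (2 * int (genusH q) - 1)
          \<le> int (degH q (lam (replicate h 0)))) \<and>
     (\<forall>j \<in> Jset h l. psi j \<noteq> 0 \<longrightarrow>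
        int (degH q (psi j)) - int (sum_list j) * mH \<le> int (degH q (lam (replicate h 0))))"

definition solutions_of_degree :: "nat \<Rightarrow> nat \<Rightarrow> nat \<Rightarrow> nat \<Rightarrow> int \<Rightarrow> (nat \<Rightarrow> 'a::comm_ring_1 poly poly)
    \<Rightarrow> nat \<Rightarrow> ((nat list \<Rightarrow> 'a poly poly) \<times> (nat list \<Rightarrow> 'a poly poly)) set" where
  "solutions_of_degree q h s l mH Rv \<tau> =
     {(lam, psi). is_solution q h s l mH Rv lam psi \<and> degH q (lam (replicate h 0)) = \<tau>}"

definition Cle :: "nat \<Rightarrow> nat \<Rightarrow> nat" where
  "Cle h l = card {j::nat list. length j = h \<and> sum_list j \<le> l}"

definition Clt :: "nat \<Rightarrow> nat \<Rightarrow> nat" where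
  "Clt h s = card {i::nat list. length i = h \<and> sum_list i < s}"

definition Wlt :: "nat \<Rightarrow> nat \<Rightarrow> nat" where
  "Wlt h s = (\<Sum>i \<in> {i::nat list. length i = h \<and> sum_list i < s}. sum_list i)"

definition Wle :: "nat \<Rightarrow> nat \<Rightarrow> nat" where
  "Wle h l = (\<Sum>j \<in> {j::nat list. length j = h \<and> sum_list j \<le> l}. sum_list j)"

definition deltaH :: "nat \<Rightarrow> nat \<Rightarrow> nat \<Rightarrow> nat \<Rightarrow> int \<Rightarrow> nat \<Rightarrow> int" where
  "deltaH q h s l mH \<tau> =
     (int \<tau> + 1) * int (Cle h l)
     - int (q ^ 3) * (int (Wlt h s) + int s * int (Cle h l) - int s * int (Clt h s))
     + mH * int (Wle h l) - int (genusH q) * int (Cle h l)"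

end

theory Submission
  imports Defs "HOL-Library.FuncSet"
begin


definition wb :: "nat \<Rightarrow> nat \<Rightarrow> 'a::comm_ring_1 poly poly \<Rightarrow> bool" where
  "wb q m f \<longleftrightarrow> (\<forall>i j. coeff (coeff f j) i \<noteq> 0 \<longrightarrow> i*q + j*(q+1) \<le> m)"

lemma wb_0[simp]: "wb q m 0" by (simp add: wb_def)

lemma wb_mono: "wb q m f \<Longrightarrow> m \<le> m' \<Longrightarrow> wb q m' f"
  unfolding wb_def by (meson le_trans)

lemma wb_add: "wb q m f \<Longrightarrow> wb q m g \<Longrightarrow> wb q m (f + g)"
  unfolding wb_def by (metis add.right_neutral coeff_add)

lemma wb_uminus: "wb q m f \<Longrightarrow> wb q m (- f)"
  unfolding wb_def by simp

lemma wb_diff: "wb q m f \<Longrightarrow> wb q m g \<Longrightarrow> wb q m (f - g)"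
  unfolding wb_def by (metis coeff_diff diff_self)

lemma wb_sum: "(\<And>x. x \<in> A \<Longrightarrow> wb q m (f x)) \<Longrightarrow> wb q m (\<Sum>x\<in>A. f x)"
  by (induction A rule: infinite_finite_induct) (auto intro: wb_add)

lemma wb_mult: assumes "wb q m f" "wb q k g" shows "wb q (m + k) (f * g)"
  unfolding wb_def
proof (intro allI impI)
  fix i j
  assume nz: "coeff (coeff (f * g) j) i \<noteq> 0"
  have "coeff (coeff (f * g) j) i = (\<Sum>a\<le>j. \<Sum>b\<le>i. coeff (coeff f a) b * coeff (coeff g (j - a)) (i - b))"
    by (simp add: coeff_mult coeff_sum)
  with nz obtain a b where ab: "a \<le> j" "b \<le> i" "coeff (coeff f a) b * coeff (coeff g (j - a)) (i - b) \<noteq> 0"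
    by (metis (no_types, lifting) atMost_iff sum.neutral)
  hence "coeff (coeff f a) b \<noteq> 0" "coeff (coeff g (j-a)) (i-b) \<noteq> 0" by auto
  hence "b*q + a*(q+1) \<le> m" "(i-b)*q + (j-a)*(q+1) \<le> k"
    using assms unfolding wb_def by blast+
  moreover obtain i' j' where "i = b + i'" "j = a + j'" using ab by (metis le_add_diff_inverse)
  ultimately show "i*q + j*(q+1) \<le> m + k" by (simp add: algebra_simps)
qed

lemma wb_power: "wb q m f \<Longrightarrow> wb q (k*m) (f ^ k)"
proof (induction k)
  case 0 then show ?case by (auto simp: wb_def coeff_1 split: if_splits)
next
  case (Suc k) then show ?case using wb_mult[of q m f "k*m" "f^k"] by (simp add: add.commute)
qed

lemma wb_prod: "(\<And>x. x \<in> A \<Longrightarrow> wb q (m x) (f x)) \<Longrightarrow> wb q (\<Sum>x\<in>A. m x) (\<Prod>x\<in>A. f x)"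
proof (induction A rule: infinite_finite_induct)
  case (infinite A) then show ?case by (auto simp: wb_def coeff_1 split: if_splits)
next
  case empty then show ?case by (auto simp: wb_def coeff_1 split: if_splits)
next
  case (insert x F) then show ?case by (simp add: wb_mult)
qed

lemma wb_of_nat: "wb q 0 (of_nat c :: 'a::comm_ring_1 poly poly)"
  by (auto simp: wb_def of_nat_poly coeff_pCons split: nat.splits)

lemma wb_monom: "wb q m (monom c k) \<longleftrightarrow> (\<forall>i. coeff c i \<noteq> 0 \<longrightarrow> i*q + k*(q+1) \<le> m)"
  by (auto simp: wb_def coeff_monom)

lemma wb_Gpol: "q \<ge> 1 \<Longrightarrow> wb q (q^3) (Gpol q :: 'a::comm_ring_1 poly poly)"
proof -
  assume q: "q \<ge> 1"
  have "q \<le> q^3" using q by (simp add: power3_eq_cube)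
  moreover have "q^2 * q = q^3" by (simp add: power2_eq_square power3_eq_cube)
  ultimately show ?thesis
    by (auto simp: wb_def Gpol_def coeff_pCons coeff_monom split: nat.splits if_splits)
qed

lemma wb_hcurve: "q \<ge> 2 \<Longrightarrow> wb q (q*(q+1)) (hcurve q :: 'a::comm_ring_1 poly poly)"
  by (auto simp: wb_def hcurve_def coeff_monom split: if_splits)

lemma wb_exists: "\<exists>m. wb q m f"
proof -
  let ?m = "(\<Sum>j\<le>degree f. degree (coeff f j) * q) + degree f * (q+1)"
  have "wb q ?m f" unfolding wb_def
  proof (intro allI impI)
    fix i j assume nz: "coeff (coeff f j) i \<noteq> 0"
    hence j: "j \<le> degree f" by (metis coeff_0 le_degree)
    have "i \<le> degree (coeff f j)" using nz le_degree by blast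
    hence "i * q \<le> degree (coeff f j) * q" by simp
    also have "\<dots> \<le> (\<Sum>j\<le>degree f. degree (coeff f j) * q)"
      using j by (intro member_le_sum) auto
    finally show "i * q + j * (q + 1) \<le> ?m" using j by (simp add: add_mono)
  qed
  then show ?thesis by blast
qed




lemma coeff_hcurve: "q \<ge> 2 \<Longrightarrow> coeff (hcurve q :: 'a::comm_ring_1 poly poly) k =
   (if k = q then 1 else if k = 1 then 1 else if k = 0 then - monom 1 (q+1) else 0)"
  by (auto simp: hcurve_def coeff_monom)

lemma degree_hcurve: assumes "q \<ge> 2" shows "degree (hcurve q :: 'a::comm_ring_1 poly poly) = q"
proof (rule antisym)
  show "degree (hcurve q :: 'a poly poly) \<le> q"
    by (rule degree_le) (use assms in \<open>auto simp: coeff_hcurve\<close>)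
  show "q \<le> degree (hcurve q :: 'a poly poly)"
    by (rule le_degree) (use assms in \<open>auto simp: coeff_hcurve\<close>)
qed

lemma lead_hcurve: "q \<ge> 2 \<Longrightarrow> lead_coeff (hcurve q :: 'a::comm_ring_1 poly poly) = 1"
  by (simp add: degree_hcurve coeff_hcurve)

lemma hcurve_nz: "q \<ge> 2 \<Longrightarrow> hcurve q \<noteq> (0 :: 'a::comm_ring_1 poly poly)"
  using lead_hcurve[of q] by (metis leading_coeff_0_iff zero_neq_one)

lemma red_uniq:
  fixes r1 r2 :: "'a::idom poly poly"
  assumes q: "q \<ge> 2" and "degree r1 < q" "degree r2 < q" "hcurve q dvd (r1 - r2)"
  shows "r1 = r2"
proof (rule ccontr)
  assume ne: "r1 \<noteq> r2"
  from assms(4) obtain t where t: "r1 - r2 = hcurve q * t" by (auto elim: dvdE)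
  with ne have "t \<noteq> 0" by auto
  hence "degree (r1 - r2) = q + degree t" unfolding t
    using degree_mult_eq[OF hcurve_nz[OF q] \<open>t \<noteq> 0\<close>] degree_hcurve[OF q] by simp
  moreover have "degree (r1 - r2) < q" using assms(2,3) degree_diff_le_max
    by (metis le_less_trans max.strict_boundedE max_def)
  ultimately show False by simp
qed

lemma degree_lt_aux: "degree (p::'b::zero poly) \<le> d \<Longrightarrow> coeff p d = 0 \<Longrightarrow> 0 < d \<Longrightarrow> degree p < d"
  by (metis le_neq_implies_less leading_coeff_0_iff degree_0)

lemma red_exists:
  fixes f :: "'a::idom poly poly"
  assumes q: "q \<ge> 2"
  shows "wb q m f \<Longrightarrow> \<exists>r. degree r < q \<and> hcurve q dvd (f - r) \<and> wb q m r"
proof (induction "degree f" arbitrary: f rule: less_induct)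
  case less
  show ?case
  proof (cases "degree f < q")
    case True then show ?thesis using less.prems by (intro exI[of _ f]) auto
  next
    case False
    define d where "d = degree f"
    define c where "c = coeff f d"
    have dq: "q \<le> d" using False d_def by simp
    hence "f \<noteq> 0" using q d_def by (metis degree_0 not_numeral_le_zero le_trans)
    hence cnz: "c \<noteq> 0" by (simp add: c_def d_def)
    then obtain i0 where i0: "coeff c i0 \<noteq> 0" by (metis coeff_0 poly_eqI)
    have w0: "i0*q + d*(q+1) \<le> m" using less.prems i0 unfolding wb_def c_def by blast
    define g where "g = monom c (d - q) * hcurve q"
    define f' where "f' = f - g"
    have m_ge: "q*(q+1) \<le> m"
    proof -
      have "q*(q+1) \<le> d*(q+1)" by (rule mult_le_mono1[OF dq])
      then show ?thesis using w0 by linarith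
    qed
    have wm: "wb q (m - q*(q+1)) (monom c (d - q))"
      unfolding wb_monom
    proof (intro allI impI)
      fix i assume "coeff c i \<noteq> 0"
      hence "i*q + d*(q+1) \<le> m" using less.prems unfolding wb_def c_def by blast
      moreover have "d*(q+1) = (d-q)*(q+1) + q*(q+1)"
        using dq by (metis add_mult_distrib le_add_diff_inverse2)
      ultimately show "i * q + (d - q) * (q + 1) \<le> m - q * (q + 1)" by linarith
    qed
    have wg: "wb q m g" unfolding g_def
      using wb_mult[OF wm wb_hcurve[OF q]] m_ge by simp
    have wf': "wb q m f'" unfolding f'_def using less.prems wg by (rule wb_diff)
    have hq: "degree (hcurve q :: 'a poly poly) = q" by (rule degree_hcurve[OF q])
    have lq: "lead_coeff (hcurve q :: 'a poly poly) = 1" by (rule lead_hcurve[OF q])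
    have degm: "degree (monom c (d-q)) = d - q" using degree_monom_eq[OF cnz] .
    have dg: "degree g \<le> d"
    proof -
      have "degree g \<le> degree (monom c (d-q)) + degree (hcurve q :: 'a poly poly)" unfolding g_def by (rule degree_mult_le)
      also have "\<dots> = d" using degm hq dq by simp
      finally show ?thesis .
    qed
    have cg: "coeff g d = c"
    proof -
      have "coeff g (degree (monom c (d-q)) + degree (hcurve q :: 'a poly poly)) = coeff (monom c (d-q)) (degree (monom c (d-q))) * coeff (hcurve q :: 'a poly poly) (degree (hcurve q :: 'a poly poly))"
        unfolding g_def by (rule coeff_mult_degree_sum)
      also have "\<dots> = c" using degm lq by simp
      finally show ?thesis using degm hq dq by simp
    qed
    have df: "degree f' \<le> d"
      unfolding f'_def using degree_diff_le[of f d g] dg d_def by simp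
    have cf: "coeff f' d = 0" unfolding f'_def using cg c_def by simp
    have d0: "0 < d" using dq q by simp
    have "degree f' < d" using degree_lt_aux[OF df cf d0] .
    then obtain r where r: "degree r < q" "hcurve q dvd (f' - r)" "wb q m r"
      using less.hyps[of f'] wf' d_def by blast
    have "f - r = (f' - r) + g" by (simp add: f'_def)
    moreover have "hcurve q dvd g" by (simp add: g_def)
    ultimately have "hcurve q dvd (f - r)" using r(2) by (metis dvd_add)
    then show ?thesis using r by blast
  qed
qed

definition red :: "nat \<Rightarrow> 'a::idom poly poly \<Rightarrow> 'a poly poly" where
  "red q f = (THE r. degree r < q \<and> hcurve q dvd (f - r))"

lemma dvd_sub_aux: "(c::'b::comm_ring_1) dvd (f - r) \<Longrightarrow> c dvd (f - r') \<Longrightarrow> c dvd (r' - r)"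
proof -
  assume "c dvd (f - r)" "c dvd (f - r')"
  then have "c dvd ((f - r) - (f - r'))" by (rule dvd_diff)
  then show ?thesis by simp
qed

lemma red_eq:
  fixes f :: "'a::idom poly poly"
  assumes q: "q \<ge> 2" and "degree r < q" "hcurve q dvd (f - r)"
  shows "red q f = r"
  unfolding red_def
proof (rule the_equality)
  show "degree r < q \<and> hcurve q dvd (f - r)" using assms by blast
  fix r' assume "degree r' < q \<and> hcurve q dvd (f - r')"
  then show "r' = r" using red_uniq[OF q, of r' r] assms dvd_sub_aux[of "hcurve q" f r r'] by blast
qed

lemma red_wb:
  fixes f :: "'a::idom poly poly"
  assumes q: "q \<ge> 2" and "wb q m f"
  shows "degree (red q f) < q \<and> hcurve q dvd (f - red q f) \<and> wb q m (red q f)"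
proof -
  obtain r where "degree r < q \<and> hcurve q dvd (f - r) \<and> wb q m r" using red_exists[OF q assms(2)] by blast
  moreover then have "red q f = r" using red_eq[OF q] by blast
  ultimately show ?thesis by simp
qed

lemma red_spec:
  fixes f :: "'a::idom poly poly"
  assumes q: "q \<ge> 2"
  shows "degree (red q f) < q" "hcurve q dvd (f - red q f)"
  using red_wb[OF q] wb_exists by blast+

lemma deg_lt_add: "degree (a::'b::comm_ring_1 poly) < q \<Longrightarrow> degree b < q \<Longrightarrow> degree (a + b) < q"
  using degree_add_le_max[of a b] by linarith
lemma deg_lt_diff: "degree (a::'b::comm_ring_1 poly) < q \<Longrightarrow> degree b < q \<Longrightarrow> degree (a - b) < q"
  using degree_diff_le_max[of a b] by linarith

lemma red_add: assumes q: "q \<ge> 2" shows "red q (f + g) = red q f + red q (g::'a::idom poly poly)"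
proof (rule red_eq[OF q])
  show "degree (red q f + red q g) < q" using red_spec[OF q] deg_lt_add by blast
  have "hcurve q dvd ((f - red q f) + (g - red q g))" using red_spec(2)[OF q] by (rule dvd_add) (rule red_spec(2)[OF q])
  then show "hcurve q dvd (f + g - (red q f + red q g))" by (simp add: algebra_simps)
qed

lemma red_diff: assumes q: "q \<ge> 2" shows "red q (f - g) = red q f - red q (g::'a::idom poly poly)"
proof (rule red_eq[OF q])
  show "degree (red q f - red q g) < q" using red_spec[OF q] deg_lt_diff by blast
  have "hcurve q dvd ((f - red q f) - (g - red q g))" using red_spec(2)[OF q] by (rule dvd_diff) (rule red_spec(2)[OF q])
  then show "hcurve q dvd (f - g - (red q f - red q g))" by (simp add: algebra_simps)
qed

lemma red_0: "q \<ge> 2 \<Longrightarrow> red q (0::'a::idom poly poly) = 0"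
  by (rule red_eq) auto




lemma suppH_bound: "(i,j) \<in> suppH q f \<Longrightarrow> j < q \<and> i \<le> (\<Sum>j<q. degree (coeff f j))"
proof -
  assume a: "(i,j) \<in> suppH q f"
  hence j: "j < q" and nz: "coeff (coeff f j) i \<noteq> 0" by (auto simp: suppH_def)
  have "i \<le> degree (coeff f j)" using nz le_degree by blast
  also have "\<dots> \<le> (\<Sum>j<q. degree (coeff f j))" using j by (intro member_le_sum) auto
  finally show ?thesis using j by simp
qed

lemma suppH_finite: "finite (suppH q f)"
proof (rule finite_subset)
  show "suppH q f \<subseteq> {..(\<Sum>j<q. degree (coeff f j))} \<times> {..<q}"
    using suppH_bound by fastforce
qed auto

lemma suppH_ne: "degree f < q \<Longrightarrow> f \<noteq> 0 \<Longrightarrow> suppH q f \<noteq> {}"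
proof -
  assume d: "degree f < q" and nz: "f \<noteq> 0"
  have "coeff f (degree f) \<noteq> 0" using nz by simp
  then obtain i where "coeff (coeff f (degree f)) i \<noteq> 0" by (metis coeff_0 poly_eqI)
  then have "(i, degree f) \<in> suppH q f" using d by (simp add: suppH_def)
  then show ?thesis by blast
qed

lemma wb_iff_supp: "degree f < q \<Longrightarrow> wb q m f \<longleftrightarrow> (\<forall>(i,j)\<in>suppH q f. i*q + j*(q+1) \<le> m)"
proof -
  assume d: "degree f < q"
  have "coeff (coeff f j) i \<noteq> 0 \<Longrightarrow> j < q" for i j
    using d by (metis coeff_0 le_degree le_less_trans)
  then show ?thesis unfolding wb_def suppH_def by auto
qed

lemma degH_le_iff:
  assumes "degree f < q" "f \<noteq> 0"
  shows "degH q f \<le> m \<longleftrightarrow> wb q m f"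
proof -
  have "degH q f \<le> m \<longleftrightarrow> (\<forall>x\<in>suppH q f. (\<lambda>(i, j). i * q + j * (q + 1)) x \<le> m)"
    unfolding degH_def using suppH_finite suppH_ne[OF assms]
    by (subst Max_le_iff) auto
  then show ?thesis using wb_iff_supp[OF assms(1)] by auto
qed

lemma degH_attained:
  assumes "degree f < q" "f \<noteq> 0"
  shows "\<exists>i j. (i,j) \<in> suppH q f \<and> i*q + j*(q+1) = degH q f"
proof -
  have "degH q f \<in> (\<lambda>(i, j). i * q + j * (q + 1)) ` suppH q f"
    unfolding degH_def using suppH_finite suppH_ne[OF assms] by (intro Max_in) auto
  then obtain i j where "(i,j) \<in> suppH q f" "degH q f = i*q + j*(q+1)" by auto
  then show ?thesis by metis
qed

lemma degH_ge: "(i,j) \<in> suppH q f \<Longrightarrow> i*q + j*(q+1) \<le> degH q f"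
  unfolding degH_def using suppH_finite by (intro Max_ge) force+

definition Lset :: "nat \<Rightarrow> nat \<Rightarrow> 'a::comm_ring_1 poly poly set" where
  "Lset q m = {f. degree f < q \<and> wb q m f}"

definition mkp :: "(nat \<times> nat) set \<Rightarrow> (nat \<times> nat \<Rightarrow> 'a::comm_ring_1) \<Rightarrow> 'a poly poly" where
  "mkp D c = (\<Sum>p\<in>D. monom (monom (c p) (fst p)) (snd p))"

lemma coeff_mkp: "finite D \<Longrightarrow> coeff (coeff (mkp D c) j) i = (if (i,j) \<in> D then c (i,j) else 0)"
proof -
  assume fin: "finite D"
  have "coeff (coeff (mkp D c) j) i = (\<Sum>p\<in>D. if p = (i,j) then c p else 0)"
    unfolding mkp_def coeff_sum by (intro sum.cong) (auto simp: coeff_monom)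
  also have "\<dots> = (if (i,j) \<in> D then c (i,j) else 0)" using fin by (simp add: sum.delta')
  finally show ?thesis .
qed

definition Wt :: "nat \<Rightarrow> nat \<Rightarrow> (nat \<times> nat) set" where
  "Wt q m = {(i,j). j < q \<and> i*q + j*(q+1) \<le> m}"

lemma Wt_finite: "q \<ge> 1 \<Longrightarrow> finite (Wt q m)"
proof (rule finite_subset)
  assume q: "q \<ge> 1"
  show "Wt q m \<subseteq> {..m} \<times> {..<q}"
  proof
    fix x assume "x \<in> Wt q m"
    then obtain i j where x: "x = (i,j)" "j < q" "i*q + j*(q+1) \<le> m" by (auto simp: Wt_def)
    have "i \<le> i * q" using q by simp
    hence "i \<le> m" using x(3) by linarith
    then show "x \<in> {..m} \<times> {..<q}" using x by auto
  qed
qed auto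

lemma mkp_Lset: "q \<ge> 1 \<Longrightarrow> mkp (Wt q m) c \<in> Lset q m"
proof -
  assume q: "q \<ge> 1"
  note cf = coeff_mkp[OF Wt_finite[OF q]]
  have "degree (mkp (Wt q m) c) \<le> q - 1"
  proof (rule degree_le, intro allI impI)
    fix j assume "q - 1 < j"
    hence "\<not> j < q" by simp
    then show "coeff (mkp (Wt q m) c) j = 0"
      apply (intro poly_eqI) apply (subst cf) apply (simp add: Wt_def) done
  qed
  hence "degree (mkp (Wt q m) c) < q" using q by simp
  moreover have "wb q m (mkp (Wt q m) c)" unfolding wb_def cf by (auto simp: Wt_def split: if_splits)
  ultimately show ?thesis by (simp add: Lset_def)
qed

lemma Lset_repr: "q \<ge> 1 \<Longrightarrow> f \<in> Lset q m \<Longrightarrow> f = mkp (Wt q m) (restrict (\<lambda>(i,j). coeff (coeff f j) i) (Wt q m))"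
proof -
  assume q: "q \<ge> 1" and f: "f \<in> Lset q m"
  note cf = coeff_mkp[OF Wt_finite[OF q]]
  have z: "coeff (coeff f j) i = 0" if "(i,j) \<notin> Wt q m" for i j
  proof (rule ccontr)
    assume nz: "coeff (coeff f j) i \<noteq> 0"
    hence "j \<le> degree f" by (metis coeff_0 le_degree)
    hence "j < q" using f by (simp add: Lset_def)
    moreover have "i*q + j*(q+1) \<le> m" using f nz by (auto simp: Lset_def wb_def)
    ultimately show False using that by (simp add: Wt_def)
  qed
  show ?thesis by (intro poly_eqI) (auto simp: cf z)
qed

lemma bij_mkp: "q \<ge> 1 \<Longrightarrow> bij_betw (mkp (Wt q m)) (PiE (Wt q m) (\<lambda>_. UNIV)) (Lset q m)"
proof -
  assume q: "q \<ge> 1"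
  note cf = coeff_mkp[OF Wt_finite[OF q]]
  show ?thesis unfolding bij_betw_def
  proof (intro conjI)
    show "inj_on (mkp (Wt q m)) (PiE (Wt q m) (\<lambda>_. UNIV))"
    proof (rule inj_onI)
      fix c d assume c: "c \<in> PiE (Wt q m) (\<lambda>_. UNIV)" and d: "d \<in> PiE (Wt q m) (\<lambda>_. UNIV)"
        and eq: "mkp (Wt q m) c = mkp (Wt q m) d"
      show "c = d"
      proof (rule PiE_ext[OF c d])
        fix x assume x: "x \<in> Wt q m"
        obtain i j where "x = (i,j)" by force
        then show "c x = d x" using arg_cong[OF eq, of "\<lambda>f. coeff (coeff f j) i"] x by (simp add: cf)
      qed
    qed
    show "mkp (Wt q m) ` PiE (Wt q m) (\<lambda>_. UNIV) = Lset q m"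
    proof
      show "mkp (Wt q m) ` PiE (Wt q m) (\<lambda>_. UNIV) \<subseteq> Lset q m" using mkp_Lset[OF q] by blast
      show "Lset q m \<subseteq> mkp (Wt q m) ` PiE (Wt q m) (\<lambda>_. UNIV)"
      proof
        fix f assume "f \<in> Lset q m"
        then show "f \<in> mkp (Wt q m) ` PiE (Wt q m) (\<lambda>_. UNIV)"
          using Lset_repr[OF q] by (intro image_eqI[of _ _ "restrict (\<lambda>(i,j). coeff (coeff f j) i) (Wt q m)"]) auto
      qed
    qed
  qed
qed

lemma card_Lset: "q \<ge> 1 \<Longrightarrow> card (Lset q m :: 'a::{comm_ring_1,finite} poly poly set) = card (UNIV :: 'a set) ^ card (Wt q m)"
proof -
  assume q: "q \<ge> 1"
  have "card (Lset q m :: 'a poly poly set) = card (PiE (Wt q m) (\<lambda>_. UNIV :: 'a set))"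
    using bij_betw_same_card[OF bij_mkp[OF q, of m, where 'a='a]] by simp
  also have "\<dots> = card (UNIV :: 'a set) ^ card (Wt q m)" by (simp add: card_PiE Wt_finite[OF q])
  finally show ?thesis .
qed

lemma finite_Lset: assumes q: "q \<ge> 1" shows "finite (Lset q m :: 'a::{comm_ring_1,finite} poly poly set)"
  using bij_betw_finite[OF bij_mkp[OF q, of m, where 'a='a]] by (simp add: finite_PiE Wt_finite[OF q])




definition Fz :: "'i set \<Rightarrow> ('i \<Rightarrow> 'b::zero set) \<Rightarrow> ('i \<Rightarrow> 'b) set" where
  "Fz A B = {l. (\<forall>i. i \<notin> A \<longrightarrow> l i = 0) \<and> (\<forall>i\<in>A. l i \<in> B i)}"

lemma bij_Fz: "bij_betw (\<lambda>l. restrict l A) (Fz A B) (PiE A B)"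
  unfolding bij_betw_def
proof (intro conjI)
  show "inj_on (\<lambda>l. restrict l A) (Fz A B)"
  proof (rule inj_onI)
    fix x y assume "x \<in> Fz A B" "y \<in> Fz A B" "restrict x A = restrict y A"
    then show "x = y" unfolding Fz_def
    proof (intro ext)
      fix i assume a: "x \<in> {l. (\<forall>i. i \<notin> A \<longrightarrow> l i = 0) \<and> (\<forall>i\<in>A. l i \<in> B i)}"
        "y \<in> {l. (\<forall>i. i \<notin> A \<longrightarrow> l i = 0) \<and> (\<forall>i\<in>A. l i \<in> B i)}" "restrict x A = restrict y A"
      show "x i = y i"
      proof (cases "i \<in> A")
        case True then show ?thesis using fun_cong[OF a(3), of i] by simp
      next
        case False then show ?thesis using a(1,2) by simp
      qed
    qed
  qed
  show "(\<lambda>l. restrict l A) ` Fz A B = PiE A B"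
  proof
    show "(\<lambda>l. restrict l A) ` Fz A B \<subseteq> PiE A B" by (auto simp: Fz_def)
    show "PiE A B \<subseteq> (\<lambda>l. restrict l A) ` Fz A B"
    proof
      fix g assume g: "g \<in> PiE A B"
      define l where "l = (\<lambda>i. if i \<in> A then g i else 0)"
      have "l \<in> Fz A B" using g by (auto simp: Fz_def l_def)
      moreover have "restrict l A = g" using g by (auto simp: l_def PiE_def extensional_def restrict_def)
      ultimately show "g \<in> (\<lambda>l. restrict l A) ` Fz A B" by blast
    qed
  qed
qed

lemma card_Fz: "finite A \<Longrightarrow> card (Fz A B) = (\<Prod>i\<in>A. card (B i))"
  using bij_betw_same_card[OF bij_Fz[of A B]] by (simp add: card_PiE)

lemma finite_Fz: "finite A \<Longrightarrow> (\<And>i. i \<in> A \<Longrightarrow> finite (B i)) \<Longrightarrow> finite (Fz A B)"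
  using bij_betw_finite[OF bij_Fz[of A B]] by (simp add: finite_PiE)

lemma weight_inj: assumes q: "q \<ge> 1"
  shows "inj_on (\<lambda>(i,j). i*q + j*(q+1)) {(i,j). j < (q::nat)}"
proof (rule inj_onI)
  fix x y assume x: "x \<in> {(i,j). j < q}" and y: "y \<in> {(i,j). j < q}"
    and e: "(\<lambda>(i,j). i*q + j*(q+1)) x = (\<lambda>(i,j). i*q + j*(q+1)) y"
  obtain i j i' j' where xy: "x = (i,j)" "y = (i',j')" by force
  have j: "j < q" "j' < q" using x y xy by auto
  have e': "(i+j)*q + j = (i'+j')*q + j'" using e xy by (simp add: algebra_simps)
  have "j = j'" using arg_cong[OF e', of "\<lambda>t. t mod q"] j by simp
  moreover then have "i = i'" using e' q by simp
  ultimately show "x = y" using xy by simp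
qed

lemma card_Wt_lower: assumes q: "q \<ge> 1"
  shows "m + 1 \<le> card (Wt q m) + genusH q"
proof -
  let ?w = "\<lambda>(i,j). i*q + j*(q+1)"
  let ?S = "SIGMA b:{..<q}. {..<b}"
  let ?G = "(\<lambda>(b,a). a*q + b) ` ?S"
  have sub: "{..m} \<subseteq> ?w ` Wt q m \<union> ?G"
  proof
    fix w assume w: "w \<in> {..m}"
    define a where "a = w div q"
    define b where "b = w mod q"
    have wab: "w = a*q + b" by (simp add: a_def b_def)
    have bq: "b < q" using q by (simp add: b_def)
    show "w \<in> ?w ` Wt q m \<union> ?G"
    proof (cases "b \<le> a")
      case True
      have "w = (a-b)*q + b*(q+1)"
      proof -
        obtain c where "a = b + c" using True le_Suc_ex by blast
        then show ?thesis using wab by (simp add: algebra_simps)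
      qed
      moreover have "(a-b, b) \<in> Wt q m" using w bq \<open>w = (a-b)*q + b*(q+1)\<close> by (simp add: Wt_def)
      ultimately show ?thesis by force
    next
      case False
      then have "(b,a) \<in> ?S" using bq by auto
      then show ?thesis using wab by force
    qed
  qed
  have "m + 1 = card {..m}" by simp
  also have "\<dots> \<le> card (?w ` Wt q m \<union> ?G)"
    by (rule card_mono[OF _ sub]) (simp add: Wt_finite[OF q])
  also have "\<dots> \<le> card (?w ` Wt q m) + card ?G" by (rule card_Un_le)
  also have "\<dots> \<le> card (Wt q m) + card ?S" by (intro add_mono card_image_le) (auto simp: Wt_finite[OF q])
  also have "card ?S = (\<Sum>b<q. b)" by (simp add: card_SigmaI)
  also have "(\<Sum>b<q. b) = genusH q"
  proof -
    have "(\<Sum>b<q. b) = (\<Sum>b\<in>{0..<q}. b)" by (simp add: lessThan_atLeast0)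
    also have "\<dots> = q*(q-1) div 2" by (simp add: Sum_Ico_nat)
    finally show ?thesis by (simp add: genusH_def)
  qed
  finally show ?thesis .
qed

lemma card_gap: assumes q: "q \<ge> 1" shows "card (Wt q a - Wt q b) \<le> a - b"
proof -
  let ?w = "\<lambda>(i,j). i*q + j*(q+1)"
  have inj: "inj_on ?w (Wt q a - Wt q b)"
    by (rule inj_on_subset[OF weight_inj[OF q]]) (auto simp: Wt_def)
  have "?w ` (Wt q a - Wt q b) \<subseteq> {b<..a}" by (auto simp: Wt_def)
  hence "card (?w ` (Wt q a - Wt q b)) \<le> card {b<..a}" by (intro card_mono) auto
  then show ?thesis using card_image[OF inj] by simp
qed

lemma card_Pd: assumes d: "d \<ge> 1"
  shows "card {p :: 'a::{comm_ring_1,finite} poly. degree p < d} \<le> card (UNIV :: 'a set) ^ d"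
    and "finite {p :: 'a::{comm_ring_1,finite} poly. degree p < d}"
proof -
  let ?f = "\<lambda>c. (\<Sum>k\<le>d-1. monom (c k) k) :: 'a poly"
  have sub: "{p :: 'a poly. degree p < d} \<subseteq> ?f ` PiE {..d-1} (\<lambda>_. UNIV)"
  proof
    fix p :: "'a poly" assume "p \<in> {p. degree p < d}"
    hence dp: "degree p \<le> d - 1" by simp
    have "?f (restrict (coeff p) {..d-1}) = (\<Sum>k\<le>d-1. monom (coeff p k) k)" by (rule sum.cong) auto
    also have "\<dots> = p" by (rule poly_as_sum_of_monoms'[OF dp])
    finally have e: "p = ?f (restrict (coeff p) {..d-1})" by simp
    show "p \<in> ?f ` PiE {..d-1} (\<lambda>_. UNIV)"
    proof (rule image_eqI[where x="restrict (coeff p) {..d-1}"])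
      show "p = ?f (restrict (coeff p) {..d-1})" by (rule e)
    qed simp
  qed
  have fin: "finite (PiE {..d-1} (\<lambda>_. UNIV :: 'a set))" by (simp add: finite_PiE)
  show "finite {p :: 'a poly. degree p < d}" by (rule finite_subset[OF sub finite_imageI[OF fin]])
  have "card {p :: 'a poly. degree p < d} \<le> card (?f ` PiE {..d-1} (\<lambda>_. UNIV))"
    by (rule card_mono[OF finite_imageI[OF fin] sub])
  also have "\<dots> \<le> card (PiE {..d-1} (\<lambda>_. UNIV :: 'a set))" by (rule card_image_le[OF fin])
  also have "\<dots> = card (UNIV :: 'a set) ^ d" using d by (simp add: card_PiE)
  finally show "card {p :: 'a poly. degree p < d} \<le> card (UNIV :: 'a set) ^ d" .
qed

lemma fiber_count:
  assumes U: "finite U" and C: "finite C" "\<Phi> ` U \<subseteq> C" and Z: "finite Z"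
    and dz: "\<And>u v. u \<in> U \<Longrightarrow> v \<in> U \<Longrightarrow> \<Phi> u = \<Phi> v \<Longrightarrow> dd u v \<in> Z"
    and dinj: "\<And>v. inj_on (\<lambda>u. dd u v) U"
  shows "card U \<le> card C * card Z"
proof -
  let ?F = "\<lambda>c. {u\<in>U. \<Phi> u = c}"
  have "U = (\<Union>c\<in>\<Phi> ` U. ?F c)" by auto
  moreover have "card (\<Union>c\<in>\<Phi> ` U. ?F c) \<le> (\<Sum>c\<in>\<Phi> ` U. card (?F c))"
    by (rule card_UN_le) (simp add: U)
  ultimately have "card U \<le> (\<Sum>c\<in>\<Phi> ` U. card (?F c))" by simp
  also have "\<dots> \<le> (\<Sum>c\<in>\<Phi> ` U. card Z)"
  proof (rule sum_mono)
    fix c assume "c \<in> \<Phi> ` U"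
    then obtain v where v: "v \<in> U" "\<Phi> v = c" by blast
    have "inj_on (\<lambda>u. dd u v) (?F c)" by (rule inj_on_subset[OF dinj]) auto
    moreover have "(\<lambda>u. dd u v) ` ?F c \<subseteq> Z" using dz v by auto
    ultimately show "card (?F c) \<le> card Z" using Z by (rule card_inj_on_le)
  qed
  also have "\<dots> = card (\<Phi> ` U) * card Z" by simp
  also have "\<dots> \<le> card C * card Z" using C by (intro mult_right_mono card_mono) auto
  finally show ?thesis .
qed




lemma combo_add: "combo q h s Rv (\<lambda>i. a i + b i) j = combo q h s Rv a j + combo q h s Rv b j"
  unfolding combo_def by (simp add: sum.distrib distrib_right)

lemma combo_diff: "combo q h s Rv (\<lambda>i. a i - b i) j = combo q h s Rv a j - combo q h s Rv b j"
  unfolding combo_def by (simp add: sum_subtractf left_diff_distrib)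

lemma combo_0: "combo q h s Rv (\<lambda>i. 0) j = 0"
  unfolding combo_def by simp

lemma preceq_sum:
  assumes "preceq i j"
  shows "(\<Sum>\<mu><length j. j ! \<mu> - i ! \<mu>) + sum_list i = sum_list j"
proof -
  have li: "length i = length j" using assms by (simp add: preceq_def)
  have le: "\<mu> < length j \<Longrightarrow> i ! \<mu> \<le> j ! \<mu>" for \<mu> using assms li by (simp add: preceq_def)
  have "(\<Sum>\<mu><length j. j ! \<mu> - i ! \<mu>) + sum_list i = (\<Sum>\<mu><length j. (j ! \<mu> - i ! \<mu>) + i ! \<mu>)"
    by (simp add: sum.distrib sum_list_sum_nth li atLeast0LessThan)
  also have "\<dots> = (\<Sum>\<mu><length j. j ! \<mu>)" using le by (intro sum.cong) auto
  also have "\<dots> = sum_list j" by (simp add: sum_list_sum_nth atLeast0LessThan)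
  finally show ?thesis .
qed

lemma wb_Rpowv:
  assumes "\<forall>\<mu> < length j. wb q RB (Rv \<mu>)"
  shows "wb q ((\<Sum>\<mu><length j. j ! \<mu> - i ! \<mu>) * RB) (Rpowv Rv i j)"
  unfolding Rpowv_def sum_distrib_right
  by (rule wb_prod) (use assms in \<open>auto intro: wb_power\<close>)

lemma wb_combo:
  assumes q: "q \<ge> 1" and lj: "length j = h"
    and R: "\<forall>\<mu> < h. wb q (q^3 + e) (Rv \<mu>)"
    and L: "\<forall>i \<in> Iset h s. wb q (t + sum_list i * e) (lam i)"
  shows "wb q (t + sum_list j * (q^3 + e)) (combo q h s Rv lam j)"
  unfolding combo_def
proof (rule wb_sum)
  fix i assume i: "i \<in> Iset h s"
  show "wb q (t + sum_list j * (q^3 + e)) (lam i * Aent q Rv i j)"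
  proof (cases "preceq i j")
    case False then show ?thesis by (simp add: Aent_def)
  next
    case True
    let ?S = "(\<Sum>\<mu><length j. j ! \<mu> - i ! \<mu>)"
    have sj: "?S + sum_list i = sum_list j" by (rule preceq_sum[OF True])
    have w1: "wb q (t + sum_list i * e) (lam i)" using L i by blast
    have w3: "wb q (?S * (q^3 + e)) (Rpowv Rv i j)" by (rule wb_Rpowv) (use R lj in auto)
    have w4: "wb q (sum_list i * q^3) (Gpol q ^ sum_list i)" by (rule wb_power[OF wb_Gpol[OF q]])
    have "wb q ((t + sum_list i * e) + ((0 + ?S * (q^3 + e)) + sum_list i * q^3))
            (lam i * (of_nat (binomv i j) * Rpowv Rv i j * Gpol q ^ sum_list i))"
      by (intro wb_mult w1 w3 w4 wb_of_nat)
    moreover have "(t + sum_list i * e) + ((0 + ?S * (q^3 + e)) + sum_list i * q^3) = t + sum_list j * (q^3 + e)"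
      using sj[symmetric] by (simp add: algebra_simps)
    ultimately have "wb q (t + sum_list j * (q^3 + e)) (lam i * (of_nat (binomv i j) * Rpowv Rv i j * Gpol q ^ sum_list i))"
      by metis
    then show ?thesis using True by (simp add: Aent_def)
  qed
qed

lemma finite_lists_sum: "finite {j::nat list. length j = h \<and> sum_list j \<le> l}"
proof (rule finite_subset)
  show "{j::nat list. length j = h \<and> sum_list j \<le> l} \<subseteq> {xs. set xs \<subseteq> {..l} \<and> length xs = h}"
    using member_le_sum_list by fastforce
  show "finite {xs. set xs \<subseteq> {..l} \<and> length xs = h}" by (rule finite_lists_length_eq) simp
qed

lemma Lset_add: "f \<in> Lset q m \<Longrightarrow> g \<in> Lset q m \<Longrightarrow> f + g \<in> Lset q m"
  unfolding Lset_def using deg_lt_add wb_add by blast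

lemma Lset_diff: "f \<in> Lset q m \<Longrightarrow> g \<in> Lset q m \<Longrightarrow> f - g \<in> Lset q m"
  unfolding Lset_def using deg_lt_diff wb_diff by blast

lemma Lset_mono: "f \<in> Lset q m \<Longrightarrow> m \<le> m' \<Longrightarrow> f \<in> Lset q m'"
  unfolding Lset_def using wb_mono by blast

lemma Lset_0: "q \<ge> 1 \<Longrightarrow> 0 \<in> Lset q m"
  unfolding Lset_def by simp

lemma Lset_degH: "f \<in> Lset q m \<Longrightarrow> f \<noteq> 0 \<Longrightarrow> degH q f \<le> m"
  unfolding Lset_def using degH_le_iff by blast

lemma Lset_of_degH: "q \<ge> 1 \<Longrightarrow> degree f < q \<Longrightarrow> (f \<noteq> 0 \<longrightarrow> degH q f \<le> m) \<Longrightarrow> f \<in> Lset q m"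
  unfolding Lset_def using degH_le_iff by (cases "f = 0") auto

lemma monic_perturb:
  fixes f v :: "'a::comm_ring_1 poly poly"
  assumes f: "degree f < q" "monicH q f" "degH q f = t" and t: "t \<ge> 1"
    and v: "degree v < q" "wb q (t - 1) v"
  shows "f + v \<noteq> 0 \<and> degH q (f + v) = t \<and> monicH q (f + v)"
proof -
  have fnz: "f \<noteq> 0" using f(2) by (simp add: monicH_def)
  have dfv: "degree (f + v) < q" using f(1) v(1) by (rule deg_lt_add)
  have cv: "coeff (coeff v j) i = 0" if "i*q + j*(q+1) = t" for i j
    using v(2) that t unfolding wb_def by force
  obtain i0 j0 where ij0: "(i0,j0) \<in> suppH q f" "i0*q + j0*(q+1) = t"
    using degH_attained[OF f(1) fnz] f(3) by blast
  have c0: "coeff (coeff (f + v) j0) i0 = coeff (coeff f j0) i0" using cv[OF ij0(2)] by simp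
  have "(i0,j0) \<in> suppH q (f + v)" using ij0(1) c0 by (simp add: suppH_def)
  hence fvnz: "f + v \<noteq> 0" by (auto simp: suppH_def simp del: coeff_add)
  have "t \<le> degH q (f + v)" using degH_ge[OF \<open>(i0,j0) \<in> suppH q (f + v)\<close>] ij0(2) by simp
  moreover have "degH q (f + v) \<le> t"
  proof -
    have "wb q t f" using degH_le_iff[OF f(1) fnz, of t] f(3) by simp
    moreover have "wb q t v" using wb_mono[OF v(2)] by simp
    ultimately have "wb q t (f + v)" by (rule wb_add)
    then show ?thesis using degH_le_iff[OF dfv fvnz] by simp
  qed
  ultimately have dt: "degH q (f + v) = t" by simp
  have "\<forall>i j. (i,j) \<in> suppH q (f+v) \<longrightarrow> i*q+j*(q+1) = degH q (f+v) \<longrightarrow> coeff (coeff (f+v) j) i = 1"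
  proof (intro allI impI)
    fix i j assume x: "(i,j) \<in> suppH q (f + v)" and "i*q+j*(q+1) = degH q (f+v)"
    hence w: "i*q + j*(q+1) = t" using dt by simp
    have ce: "coeff (coeff (f + v) j) i = coeff (coeff f j) i" using cv[OF w] by simp
    hence "(i,j) \<in> suppH q f" using x by (simp add: suppH_def)
    hence "coeff (coeff f j) i = 1" using f(2) f(3) w unfolding monicH_def by blast
    then show "coeff (coeff (f + v) j) i = 1" using ce by simp
  qed
  hence "monicH q (f + v)" unfolding monicH_def using fvnz
    by (simp add: case_prod_beta)
  then show ?thesis using fvnz dt by blast
qed




locale hsetup =
  fixes q h s l t :: nat and mH :: int and Rv :: "nat \<Rightarrow> 'a::{field,finite} poly poly"
  assumes q2: "q \<ge> 2" and cardF: "card (UNIV::'a set) = q^2"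
    and mlo: "2 * (int (genusH q) - 1) < mH" and mhi: "mH < int (q^3)"
    and R_in: "\<forall>\<mu> < h. inR q (Rv \<mu>)"
    and R_deg: "\<forall>\<mu> < h. Rv \<mu> \<noteq> 0 \<longrightarrow> degH q (Rv \<mu>) < q ^ 3 + 2 * genusH q"
    and t1: "t \<ge> 1" and s1: "s \<ge> 1" and sl: "s \<le> l"
begin

definition "gg = genusH q"
definition "ee = 2 * gg - 1"
definition "MM = nat mH"
definition "II = Iset h s"
definition "JJ = Jset h l"
definition "Jl = {j \<in> JJ. sum_list j < s}"
definition "Jh = {j \<in> JJ. s \<le> sum_list j}"
definition "zz = replicate h (0::nat)"
definition "bl i = t + sum_list i * ee - (if i = zz then 1 else 0)"
definition "bp j = t + sum_list j * MM"
definition "tpw j = t + sum_list j * (q^3 + ee)"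
definition "Sol = solutions_of_degree q h s l mH Rv t"

lemma q1: "q \<ge> 1" using q2 by simp

lemma gg_pos: "gg \<ge> 1"
proof -
  have "1 \<le> q - 1" using q2 by simp
  hence "2 * 1 \<le> q * (q - 1)" using q2 by (intro mult_le_mono)
  hence "2 \<le> q * (q - 1)" by simp
  then show ?thesis by (simp add: gg_def genusH_def)
qed

lemma ee_int: "int ee = 2 * int gg - 1" using gg_pos by (simp add: ee_def)

lemma MM_int: "int MM = mH" using mlo gg_pos by (simp add: MM_def gg_def)

lemma MM_lt: "MM < q^3" using mhi MM_int by linarith

lemma R_wb: "\<forall>\<mu> < h. wb q (q^3 + ee) (Rv \<mu>)"
proof (intro allI impI)
  fix \<mu> assume m: "\<mu> < h"
  show "wb q (q^3 + ee) (Rv \<mu>)"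
  proof (cases "Rv \<mu> = 0")
    case False
    have d: "degree (Rv \<mu>) < q" using R_in m by (simp add: inR_def)
    have "degH q (Rv \<mu>) < q^3 + 2*gg" using R_deg m False by (simp add: gg_def)
    hence "degH q (Rv \<mu>) \<le> q^3 + ee" unfolding ee_def using gg_pos by linarith
    then show ?thesis using degH_le_iff[OF d False] by simp
  qed simp
qed

lemma finite_JJ: "finite JJ"
  by (rule finite_subset[OF _ finite_lists_sum[of h l]]) (auto simp: JJ_def Jset_def)

lemma finite_II: "finite II"
proof (rule finite_subset[OF _ finite_lists_sum[of h l]])
  show "II \<subseteq> {j. length j = h \<and> sum_list j \<le> l}" using sl by (auto simp: II_def Iset_def)
qed

lemma zz_II: "zz \<in> II" using s1 by (simp add: zz_def II_def Iset_def sum_list_replicate)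

lemma sum_zz: "sum_list i = 0 \<Longrightarrow> length i = h \<Longrightarrow> i = zz"
proof -
  assume a: "sum_list i = 0" "length i = h"
  hence "\<forall>y\<in>set i. y = 0" by (simp add: sum_list_eq_0_iff)
  hence "replicate (length i) 0 = i" by (rule replicate_length_same)
  then show "i = zz" using a(2) by (simp add: zz_def)
qed

lemma bl_le: "bl i \<le> t + sum_list i * ee" by (simp add: bl_def)

lemma sol_props:
  assumes "(L, P) \<in> Sol"
  shows "\<forall>i. i \<notin> II \<longrightarrow> L i = 0" "\<forall>j. j \<notin> JJ \<longrightarrow> P j = 0"
    "\<forall>i\<in>II. L i \<in> Lset q (t + sum_list i * ee)"
    "\<forall>j\<in>JJ. P j \<in> Lset q (bp j)"
    "degree (L zz) < q" "monicH q (L zz)" "degH q (L zz) = t"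
    "\<forall>j\<in>JJ. sum_list j < s \<longrightarrow> eqR q (P j) (combo q h s Rv L j)"
    "\<forall>j\<in>JJ. s \<le> sum_list j \<longrightarrow> (\<exists>u. eqR q (P j) (combo q h s Rv L j + u * Gpol q ^ s))"
proof -
  have S: "is_solution q h s l mH Rv L P" "degH q (L zz) = t"
    using assms by (auto simp: Sol_def solutions_of_degree_def zz_def)
  note D = S(1)[unfolded is_solution_def, folded II_def JJ_def zz_def]
  show "\<forall>i. i \<notin> II \<longrightarrow> L i = 0" "\<forall>j. j \<notin> JJ \<longrightarrow> P j = 0" using D by blast+
  show "degree (L zz) < q" using D zz_II by (simp add: inR_def)
  show "monicH q (L zz)" "degH q (L zz) = t" using D S(2) by blast+
  show "\<forall>j\<in>JJ. sum_list j < s \<longrightarrow> eqR q (P j) (combo q h s Rv L j)"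
    "\<forall>j\<in>JJ. s \<le> sum_list j \<longrightarrow> (\<exists>u. eqR q (P j) (combo q h s Rv L j + u * Gpol q ^ s))"
    using D by blast+
  show "\<forall>i\<in>II. L i \<in> Lset q (t + sum_list i * ee)"
  proof
    fix i assume i: "i \<in> II"
    have "degree (L i) < q" using D i by (simp add: inR_def)
    moreover have "L i \<noteq> 0 \<longrightarrow> degH q (L i) \<le> t + sum_list i * ee"
    proof
      assume "L i \<noteq> 0"
      hence "int (degH q (L i)) - int (sum_list i) * (2 * int (genusH q) - 1) \<le> int t"
        using D i S(2) by auto
      hence "int (degH q (L i)) \<le> int t + int (sum_list i) * int ee" using ee_int by (simp add: gg_def)
      hence "int (degH q (L i)) \<le> int (t + sum_list i * ee)" by simp
      then show "degH q (L i) \<le> t + sum_list i * ee" by linarith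
    qed
    ultimately show "L i \<in> Lset q (t + sum_list i * ee)" by (rule Lset_of_degH[OF q1])
  qed
  show "\<forall>j\<in>JJ. P j \<in> Lset q (bp j)"
  proof
    fix j assume j: "j \<in> JJ"
    have "degree (P j) < q" using D j by (simp add: inR_def)
    moreover have "P j \<noteq> 0 \<longrightarrow> degH q (P j) \<le> bp j"
    proof
      assume "P j \<noteq> 0"
      hence "int (degH q (P j)) - int (sum_list j) * mH \<le> int t"
        using D j S(2) by auto
      hence "int (degH q (P j)) \<le> int t + int (sum_list j) * int MM" using MM_int by simp
      hence "int (degH q (P j)) \<le> int (t + sum_list j * MM)" by simp
      then show "degH q (P j) \<le> bp j" unfolding bp_def by linarith
    qed
    ultimately show "P j \<in> Lset q (bp j)" by (rule Lset_of_degH[OF q1])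
  qed
qed

end



context hsetup begin

definition "UU = Fz II (\<lambda>i. Lset q (bl i) :: 'a poly poly set) \<times> Fz Jh (\<lambda>j. Lset q (bp j) :: 'a poly poly set)"
definition "GapS = (SIGMA j:Jl. Wt q (tpw j) - Wt q (bp j))"
definition "gs = (monom 1 (q^2) - monom 1 1 :: 'a poly) ^ s"
definition "Pd = {p :: 'a poly. degree p < s * q^2}"
definition "CC = PiE GapS (\<lambda>_. UNIV :: 'a set) \<times> PiE (Jh \<times> {..<q}) (\<lambda>_. Pd)"
definition "Phi u = (restrict (\<lambda>(j,(a,b)). coeff (coeff (red q (combo q h s Rv (fst u) j)) b) a) GapS,
   restrict (\<lambda>(j,b). coeff (red q (snd u j - combo q h s Rv (fst u) j)) b mod gs) (Jh \<times> {..<q}))"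
definition "ZZ = {u \<in> UU. (\<forall>(j,a,b)\<in>GapS. coeff (coeff (red q (combo q h s Rv (fst u) j)) b) a = 0)
   \<and> (\<forall>j\<in>Jh. \<forall>b<q. gs dvd coeff (red q (snd u j - combo q h s Rv (fst u) j)) b)}"
definition "dd u v = ((\<lambda>i. fst u i - fst v i), (\<lambda>j. snd u j - snd v j))"

lemma finite_Jl: "finite Jl" using finite_JJ by (simp add: Jl_def)
lemma finite_Jh: "finite Jh" using finite_JJ by (simp add: Jh_def)

lemma finite_GapS: "finite GapS"
  unfolding GapS_def using finite_Jl Wt_finite[OF q1] by auto

lemma card_UU: "card UU = (q^2) ^ ((\<Sum>i\<in>II. card (Wt q (bl i))) + (\<Sum>j\<in>Jh. card (Wt q (bp j))))"
proof -
  have "card UU = (\<Prod>i\<in>II. card (Lset q (bl i) :: 'a poly poly set)) * (\<Prod>j\<in>Jh. card (Lset q (bp j) :: 'a poly poly set))"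
    unfolding UU_def card_cartesian_product by (simp add: card_Fz finite_II finite_Jh)
  also have "\<dots> = (\<Prod>i\<in>II. (q^2) ^ card (Wt q (bl i))) * (\<Prod>j\<in>Jh. (q^2) ^ card (Wt q (bp j)))"
    using card_Lset[OF q1, where 'a='a] cardF by simp
  also have "\<dots> = (q^2) ^ ((\<Sum>i\<in>II. card (Wt q (bl i))) + (\<Sum>j\<in>Jh. card (Wt q (bp j))))"
    by (simp add: power_sum power_add)
  finally show ?thesis .
qed

lemma finite_UU: "finite UU"
  unfolding UU_def by (intro finite_cartesian_product finite_Fz finite_II finite_Jh) (simp_all add: finite_Lset[OF q1])

lemma Pd_fin: "finite Pd" and Pd_card: "card Pd \<le> (q^2) ^ (s * q^2)"
proof -
  have d: "s * q^2 \<ge> 1" using s1 q1 by simp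
  show "finite Pd" unfolding Pd_def using card_Pd(2)[OF d, where 'a='a] .
  show "card Pd \<le> (q^2) ^ (s * q^2)" unfolding Pd_def using card_Pd(1)[OF d, where 'a='a] cardF by simp
qed

lemma finite_CC: "finite CC"
  unfolding CC_def using finite_GapS finite_Jh Pd_fin by (intro finite_cartesian_product finite_PiE) auto

lemma card_CC: "card CC \<le> (q^2) ^ card GapS * ((q^2) ^ (s * q^2)) ^ (card Jh * q)"
proof -
  have "card CC = (q^2) ^ card GapS * card Pd ^ (card Jh * q)"
    unfolding CC_def card_cartesian_product using finite_GapS finite_Jh cardF
    by (simp add: card_PiE card_cartesian_product)
  also have "\<dots> \<le> (q^2) ^ card GapS * ((q^2) ^ (s * q^2)) ^ (card Jh * q)"
    using Pd_card by (intro mult_left_mono power_mono) auto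
  finally show ?thesis .
qed

lemma degree_g: "degree (monom 1 (q^2) - monom 1 1 :: 'a poly) = q^2"
proof -
  have "2^2 \<le> q^2" by (rule power_mono[OF q2]) simp
  hence "(4::nat) \<le> q^2" by simp
  hence q2': "q^2 \<noteq> 1" by linarith
  show ?thesis
  proof (rule antisym)
    show "degree (monom 1 (q^2) - monom 1 1 :: 'a poly) \<le> q^2"
      by (rule degree_le) (use q2' q2 in \<open>auto simp: coeff_monom\<close>)
    show "q^2 \<le> degree (monom 1 (q^2) - monom 1 1 :: 'a poly)"
      by (rule le_degree) (unfold coeff_diff coeff_monom if_P[OF refl] if_not_P[OF q2'[symmetric]], simp)
  qed
qed

lemma degree_gs: "degree gs = s * q^2" and gs_nz: "gs \<noteq> 0"
proof -
  have "q^2 \<noteq> 0" using q2 by simp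
  hence nz: "(monom 1 (q^2) - monom 1 1 :: 'a poly) \<noteq> 0" using degree_g by (intro notI) simp
  show "degree gs = s * q^2" unfolding gs_def using degree_power_eq[OF nz] degree_g by simp
  show "gs \<noteq> 0" unfolding gs_def using nz by simp
qed

lemma Phi_CC: "Phi ` UU \<subseteq> CC"
proof
  fix x assume "x \<in> Phi ` UU"
  then obtain u where x: "x = Phi u" by blast
  have "p mod gs \<in> Pd" for p
  proof (cases "p mod gs = 0")
    case True then show ?thesis using s1 q1 by (simp add: Pd_def)
  next
    case False then show ?thesis using degree_mod_less[OF gs_nz, of p] degree_gs by (simp add: Pd_def)
  qed
  then show "x \<in> CC" unfolding x Phi_def CC_def by auto
qed

end



lemma Fz_diff: "f \<in> Fz A (\<lambda>i. Lset q (m i)) \<Longrightarrow> g \<in> Fz A (\<lambda>i. Lset q (m i)) \<Longrightarrow>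
    (\<lambda>i. f i - g i) \<in> Fz A (\<lambda>i. Lset q (m i) :: 'b::comm_ring_1 poly poly set)"
proof -
  assume f: "f \<in> Fz A (\<lambda>i. Lset q (m i))" and g: "g \<in> Fz A (\<lambda>i. Lset q (m i))"
  have "\<forall>i. i \<notin> A \<longrightarrow> f i - g i = 0" using f g by (simp add: Fz_def)
  moreover have "\<forall>i\<in>A. f i - g i \<in> Lset q (m i)"
  proof
    fix i assume "i \<in> A"
    then have "f i \<in> Lset q (m i)" "g i \<in> Lset q (m i)" using f g by (auto simp: Fz_def)
    then show "f i - g i \<in> Lset q (m i)" by (rule Lset_diff)
  qed
  ultimately show ?thesis by (simp add: Fz_def)
qed

context hsetup begin

lemma dz: assumes u: "u \<in> UU" and v: "v \<in> UU" and e: "Phi u = Phi v"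
  shows "dd u v \<in> ZZ"
proof -
  have uu: "dd u v \<in> UU" using u v unfolding UU_def dd_def by (auto intro: Fz_diff)
  have e1: "restrict (\<lambda>(j,(a,b)). coeff (coeff (red q (combo q h s Rv (fst u) j)) b) a) GapS =
            restrict (\<lambda>(j,(a,b)). coeff (coeff (red q (combo q h s Rv (fst v) j)) b) a) GapS"
    using e unfolding Phi_def by simp
  have e2: "restrict (\<lambda>(j,b). coeff (red q (snd u j - combo q h s Rv (fst u) j)) b mod gs) (Jh \<times> {..<q}) =
            restrict (\<lambda>(j,b). coeff (red q (snd v j - combo q h s Rv (fst v) j)) b mod gs) (Jh \<times> {..<q})"
    using e unfolding Phi_def by simp
  have g1: "coeff (coeff (red q (combo q h s Rv (fst (dd u v)) j)) b) a = 0" if x: "(j,a,b) \<in> GapS" for j a b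
  proof -
    have "coeff (coeff (red q (combo q h s Rv (fst u) j)) b) a = coeff (coeff (red q (combo q h s Rv (fst v) j)) b) a"
      using fun_cong[OF e1, of "(j,a,b)"] x by simp
    then show ?thesis by (simp add: dd_def combo_diff red_diff[OF q2])
  qed
  have g2: "gs dvd coeff (red q (snd (dd u v) j - combo q h s Rv (fst (dd u v)) j)) b"
    if j: "j \<in> Jh" and b: "b < q" for j b
  proof -
    have "coeff (red q (snd u j - combo q h s Rv (fst u) j)) b mod gs = coeff (red q (snd v j - combo q h s Rv (fst v) j)) b mod gs"
      using fun_cong[OF e2, of "(j,b)"] j b by simp
    hence "gs dvd coeff (red q (snd u j - combo q h s Rv (fst u) j)) b - coeff (red q (snd v j - combo q h s Rv (fst v) j)) b"
      by (simp add: mod_eq_dvd_iff)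
    moreover have "snd (dd u v) j - combo q h s Rv (fst (dd u v)) j = (snd u j - combo q h s Rv (fst u) j) - (snd v j - combo q h s Rv (fst v) j)"
      by (simp add: dd_def combo_diff)
    ultimately show ?thesis by (simp add: red_diff[OF q2])
  qed
  show ?thesis unfolding ZZ_def using uu g1 g2 by blast
qed

lemma dinj: "inj_on (\<lambda>u. dd u v) (X :: ((nat list \<Rightarrow> 'a poly poly) \<times> (nat list \<Rightarrow> 'a poly poly)) set)"
proof (rule inj_onI)
  fix x y assume "dd x v = dd y v"
  hence "\<forall>i. fst x i - fst v i = fst y i - fst v i" "\<forall>i. snd x i - snd v i = snd y i - snd v i"
    by (auto simp: dd_def fun_eq_iff)
  hence "fst x = fst y" "snd x = snd y" by (auto simp: fun_eq_iff)
  then show "x = y" by (simp add: prod_eq_iff)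
qed

lemma ZZ_sub: "ZZ \<subseteq> UU" by (auto simp: ZZ_def)

lemma finite_ZZ: "finite ZZ" using finite_subset[OF ZZ_sub finite_UU] .

lemma card_GapS: "card GapS \<le> (\<Sum>j\<in>Jl. sum_list j * (q^3 + ee - MM))"
proof -
  have "card GapS = (\<Sum>j\<in>Jl. card (Wt q (tpw j) - Wt q (bp j)))"
    unfolding GapS_def using finite_Jl Wt_finite[OF q1] by (simp add: card_SigmaI)
  also have "\<dots> \<le> (\<Sum>j\<in>Jl. tpw j - bp j)" by (intro sum_mono card_gap[OF q1])
  also have "\<dots> = (\<Sum>j\<in>Jl. sum_list j * (q^3 + ee - MM))"
    by (intro sum.cong) (auto simp: tpw_def bp_def diff_mult_distrib2)
  finally show ?thesis .
qed

end



context hsetup begin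

definition "Tm L0 P0 u = ((\<lambda>i. L0 i + fst u i),
   (\<lambda>j. P0 j + (if j \<in> Jl then red q (combo q h s Rv (fst u) j) else snd u j)))"

lemma Tm_inj: "inj_on (Tm L0 P0) UU"
proof (rule inj_onI)
  fix x y assume x: "x \<in> UU" and y: "y \<in> UU" and e: "Tm L0 P0 x = Tm L0 P0 y"
  have f: "fst x = fst y" using e by (auto simp: Tm_def fun_eq_iff)
  have "snd x j = snd y j" for j
  proof (cases "j \<in> Jh")
    case True
    hence "j \<notin> Jl" by (auto simp: Jl_def Jh_def)
    have "snd (Tm L0 P0 x) j = snd (Tm L0 P0 y) j" using e by simp
    then show ?thesis using \<open>j \<notin> Jl\<close> by (simp add: Tm_def)
  next
    case False
    then show ?thesis using x y by (auto simp: UU_def Fz_def)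
  qed
  then show "x = y" using f by (simp add: prod_eq_iff fun_eq_iff)
qed

lemma gpow: "Gpol q ^ s = [:gs:]"
  unfolding Gpol_def gs_def by (simp add: poly_const_pow)

lemma Tm_Sol:
  assumes S0: "(L0, P0) \<in> Sol" and u: "u \<in> ZZ"
  shows "Tm L0 P0 u \<in> Sol"
proof -
  obtain la ps where uu: "u = (la, ps)" by force
  have la: "\<forall>i. i \<notin> II \<longrightarrow> la i = 0" "\<forall>i\<in>II. la i \<in> Lset q (bl i)"
    and ps: "\<forall>j. j \<notin> Jh \<longrightarrow> ps j = 0" "\<forall>j\<in>Jh. ps j \<in> Lset q (bp j)"
    using u uu by (auto simp: ZZ_def UU_def Fz_def)
  have gap: "\<forall>(j,a,b)\<in>GapS. coeff (coeff (red q (combo q h s Rv la j)) b) a = 0"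
    and gdv: "\<forall>j\<in>Jh. \<forall>b<q. gs dvd coeff (red q (ps j - combo q h s Rv la j)) b"
    using u uu by (auto simp: ZZ_def)
  note SP = sol_props[OF S0]
  define psi' where "psi' j = (if j \<in> Jl then red q (combo q h s Rv la j) else ps j)" for j
  have T: "Tm L0 P0 u = ((\<lambda>i. L0 i + la i), (\<lambda>j. P0 j + psi' j))"
    unfolding Tm_def uu psi'_def by (simp add: fun_eq_iff)
  have lawb: "\<forall>i\<in>Iset h s. wb q (t + sum_list i * ee) (la i)"
  proof
    fix i assume "i \<in> Iset h s"
    then have "la i \<in> Lset q (bl i)" using la(2) by (simp add: II_def)
    then have "wb q (bl i) (la i)" by (simp add: Lset_def)
    then show "wb q (t + sum_list i * ee) (la i)" by (rule wb_mono[OF _ bl_le])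
  qed
  have psiL: "psi' j \<in> Lset q (bp j)" if j: "j \<in> JJ" for j
  proof (cases "j \<in> Jl")
    case True
    have lj: "length j = h" using j by (simp add: JJ_def Jset_def)
    have "wb q (tpw j) (combo q h s Rv la j)"
      unfolding tpw_def by (rule wb_combo[OF q1 lj R_wb lawb])
    then have r: "degree (red q (combo q h s Rv la j)) < q" "wb q (tpw j) (red q (combo q h s Rv la j))"
      using red_wb[OF q2] by blast+
    have "wb q (bp j) (red q (combo q h s Rv la j))" unfolding wb_def
    proof (intro allI impI)
      fix a b assume nz: "coeff (coeff (red q (combo q h s Rv la j)) b) a \<noteq> 0"
      have bq: "b < q" using nz r(1) by (metis coeff_0 le_degree le_less_trans)
      have wt: "a*q + b*(q+1) \<le> tpw j" using nz r(2) by (auto simp: wb_def)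
      show "a*q + b*(q+1) \<le> bp j"
      proof (rule ccontr)
        assume "\<not> a*q + b*(q+1) \<le> bp j"
        hence "(j,a,b) \<in> GapS" using True bq wt by (auto simp: GapS_def Wt_def)
        then show False using gap nz by auto
      qed
    qed
    then show ?thesis using True r(1) by (simp add: psi'_def Lset_def)
  next
    case False
    hence "j \<in> Jh" using j by (auto simp: Jl_def Jh_def)
    then show ?thesis using False ps(2) by (simp add: psi'_def)
  qed
  have psi0: "psi' j = 0" if "j \<notin> JJ" for j
    using that ps(1) by (auto simp: psi'_def Jl_def Jh_def)
  have psiD: "hcurve q dvd (psi' j - combo q h s Rv la j)" if "j \<in> Jl" for j
  proof -
    have "hcurve q dvd (combo q h s Rv la j - red q (combo q h s Rv la j))" by (rule red_spec(2)[OF q2])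
    hence "hcurve q dvd - (combo q h s Rv la j - red q (combo q h s Rv la j))" by (rule dvd_minus_iff[THEN iffD2])
    then show ?thesis using that by (simp add: psi'_def)
  qed
  have psiH: "\<exists>w. hcurve q dvd (psi' j - (combo q h s Rv la j + w * Gpol q ^ s))" if j: "j \<in> Jh" for j
  proof -
    let ?r = "red q (ps j - combo q h s Rv la j)"
    have dr: "degree ?r < q" by (rule red_spec(1)[OF q2])
    define w where "w = (\<Sum>b<q. monom (coeff ?r b div gs) b)"
    have cw: "coeff w b = (if b < q then coeff ?r b div gs else 0)" for b
      unfolding w_def by (simp add: coeff_sum coeff_monom)
    have rw: "?r = w * Gpol q ^ s"
    proof (rule poly_eqI)
      fix b
      show "coeff ?r b = coeff (w * Gpol q ^ s) b"
      proof (cases "b < q")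
        case True
        then show ?thesis using gdv j by (simp add: gpow cw)
      next
        case False
        hence "coeff ?r b = 0" using dr by (metis coeff_0 le_degree le_less_trans not_le)
        then show ?thesis using False by (simp add: gpow cw)
      qed
    qed
    have jl: "j \<notin> Jl" using j by (auto simp: Jl_def Jh_def)
    have "hcurve q dvd ((ps j - combo q h s Rv la j) - ?r)" by (rule red_spec(2)[OF q2])
    hence "hcurve q dvd (psi' j - (combo q h s Rv la j + w * Gpol q ^ s))"
      using jl rw by (simp add: psi'_def algebra_simps)
    then show ?thesis by blast
  qed
  have "bl zz = t - 1" by (simp add: bl_def zz_def sum_list_replicate)
  hence v0: "la zz \<in> Lset q (t - 1)" using la(2) zz_II by metis
  have MP: "L0 zz + la zz \<noteq> 0 \<and> degH q (L0 zz + la zz) = t \<and> monicH q (L0 zz + la zz)"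
    by (rule monic_perturb[OF SP(5) SP(6) SP(7) t1]) (use v0 in \<open>auto simp: Lset_def\<close>)
  have IS: "is_solution q h s l mH Rv (\<lambda>i. L0 i + la i) (\<lambda>j. P0 j + psi' j)"
    unfolding is_solution_def
  proof (intro conjI)
    show "\<forall>i. i \<notin> Iset h s \<longrightarrow> L0 i + la i = 0" using SP(1) la(1) by (simp add: II_def)
    show "\<forall>j. j \<notin> Jset h l \<longrightarrow> P0 j + psi' j = 0" using SP(2) psi0 by (simp add: JJ_def)
    show "\<forall>i\<in>Iset h s. inR q (L0 i + la i)"
      using SP(3) la(2) unfolding II_def Lset_def inR_def by (auto intro: deg_lt_add)
    show "\<forall>j\<in>Jset h l. inR q (P0 j + psi' j)"
      using SP(4) psiL unfolding JJ_def Lset_def inR_def by (auto intro: deg_lt_add)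
    show "monicH q (L0 (replicate h 0) + la (replicate h 0))" using MP by (simp add: zz_def)
    show "\<forall>j\<in>Jset h l. sum_list j < s \<longrightarrow> eqR q (P0 j + psi' j) (combo q h s Rv (\<lambda>i. L0 i + la i) j)"
    proof (intro ballI impI)
      fix j assume j: "j \<in> Jset h l" "sum_list j < s"
      hence jl: "j \<in> Jl" by (simp add: Jl_def JJ_def)
      have "hcurve q dvd (P0 j - combo q h s Rv L0 j)" using SP(8) j by (simp add: JJ_def eqR_def)
      hence "hcurve q dvd ((P0 j - combo q h s Rv L0 j) + (psi' j - combo q h s Rv la j))"
        using psiD[OF jl] by (rule dvd_add)
      then show "eqR q (P0 j + psi' j) (combo q h s Rv (\<lambda>i. L0 i + la i) j)"
        by (simp add: eqR_def combo_add algebra_simps)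
    qed
    show "\<forall>j\<in>Jset h l. s \<le> sum_list j \<longrightarrow>
        (\<exists>w. eqR q (P0 j + psi' j) (combo q h s Rv (\<lambda>i. L0 i + la i) j + w * Gpol q ^ s))"
    proof (intro ballI impI)
      fix j assume j: "j \<in> Jset h l" "s \<le> sum_list j"
      hence jh: "j \<in> Jh" by (simp add: Jh_def JJ_def)
      obtain w0 where w0: "hcurve q dvd (P0 j - (combo q h s Rv L0 j + w0 * Gpol q ^ s))"
        using SP(9) j by (auto simp: JJ_def eqR_def)
      obtain w1 where w1: "hcurve q dvd (psi' j - (combo q h s Rv la j + w1 * Gpol q ^ s))"
        using psiH[OF jh] by blast
      have "hcurve q dvd ((P0 j - (combo q h s Rv L0 j + w0 * Gpol q ^ s)) + (psi' j - (combo q h s Rv la j + w1 * Gpol q ^ s)))"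
        using w0 w1 by (rule dvd_add)
      then have "eqR q (P0 j + psi' j) (combo q h s Rv (\<lambda>i. L0 i + la i) j + (w0 + w1) * Gpol q ^ s)"
        by (simp add: eqR_def combo_add algebra_simps)
      then show "\<exists>w. eqR q (P0 j + psi' j) (combo q h s Rv (\<lambda>i. L0 i + la i) j + w * Gpol q ^ s)" by blast
    qed
    show "\<forall>i\<in>Iset h s. L0 i + la i \<noteq> 0 \<longrightarrow>
        int (degH q (L0 i + la i)) - int (sum_list i) * (2 * int (genusH q) - 1)
          \<le> int (degH q (L0 (replicate h 0) + la (replicate h 0)))"
    proof (intro ballI impI)
      fix i assume i: "i \<in> Iset h s" and nz: "L0 i + la i \<noteq> 0"
      have "L0 i + la i \<in> Lset q (t + sum_list i * ee)"
        using SP(3) la(2) i bl_le unfolding II_def by (meson Lset_add Lset_mono)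
      hence "degH q (L0 i + la i) \<le> t + sum_list i * ee" using nz by (rule Lset_degH)
      hence "int (degH q (L0 i + la i)) \<le> int (t + sum_list i * ee)" by (simp only: of_nat_le_iff)
      hence "int (degH q (L0 i + la i)) \<le> int t + int (sum_list i) * int ee" by simp
      then show "int (degH q (L0 i + la i)) - int (sum_list i) * (2 * int (genusH q) - 1)
          \<le> int (degH q (L0 (replicate h 0) + la (replicate h 0)))"
        using MP ee_int by (simp add: zz_def gg_def)
    qed
    show "\<forall>j\<in>Jset h l. P0 j + psi' j \<noteq> 0 \<longrightarrow>
        int (degH q (P0 j + psi' j)) - int (sum_list j) * mH \<le> int (degH q (L0 (replicate h 0) + la (replicate h 0)))"
    proof (intro ballI impI)
      fix j assume j: "j \<in> Jset h l" and nz: "P0 j + psi' j \<noteq> 0"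
      have "P0 j + psi' j \<in> Lset q (bp j)"
        using SP(4) psiL j unfolding JJ_def by (meson Lset_add)
      hence "degH q (P0 j + psi' j) \<le> bp j" using nz by (rule Lset_degH)
      hence "int (degH q (P0 j + psi' j)) \<le> int (t + sum_list j * MM)" unfolding bp_def by (simp only: of_nat_le_iff)
      hence "int (degH q (P0 j + psi' j)) \<le> int t + int (sum_list j) * int MM" by simp
      then show "int (degH q (P0 j + psi' j)) - int (sum_list j) * mH \<le> int (degH q (L0 (replicate h 0) + la (replicate h 0)))"
        using MP MM_int by (simp add: zz_def)
    qed
  qed
  have "degH q (L0 (replicate h 0) + la (replicate h 0)) = t" using MP by (simp add: zz_def)
  then show ?thesis using IS T by (simp add: Sol_def solutions_of_degree_def)
qed

lemma finite_Sol: "finite Sol"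
proof (rule finite_subset)
  show "Sol \<subseteq> Fz II (\<lambda>i. Lset q (t + sum_list i * ee) :: 'a poly poly set) \<times> Fz JJ (\<lambda>j. Lset q (bp j) :: 'a poly poly set)"
  proof
    fix x assume x: "x \<in> Sol"
    obtain L P where "x = (L, P)" by force
    then show "x \<in> Fz II (\<lambda>i. Lset q (t + sum_list i * ee)) \<times> Fz JJ (\<lambda>j. Lset q (bp j))"
      using sol_props[of L P] x by (auto simp: Fz_def)
  qed
  show "finite (Fz II (\<lambda>i. Lset q (t + sum_list i * ee) :: 'a poly poly set) \<times> Fz JJ (\<lambda>j. Lset q (bp j) :: 'a poly poly set))"
    by (intro finite_cartesian_product finite_Fz finite_II finite_JJ) (simp_all add: finite_Lset[OF q1])
qed

end



context hsetup begin

lemma II_split: "II = insert zz Jl" and zz_Jl: "zz \<notin> Jl"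
proof -
  have "i \<in> II \<longleftrightarrow> i = zz \<or> i \<in> Jl" for i
  proof
    assume i: "i \<in> II"
    show "i = zz \<or> i \<in> Jl"
    proof (cases "sum_list i = 0")
      case True
      have "length i = h" using i by (simp add: II_def Iset_def)
      then show ?thesis using sum_zz[OF True] by simp
    next
      case False
      hence "1 \<le> sum_list i" by linarith
      hence "i \<in> Jl" using i sl by (auto simp: II_def Iset_def Jl_def JJ_def Jset_def)
      then show ?thesis by simp
    qed
  next
    assume "i = zz \<or> i \<in> Jl" then show "i \<in> II" using zz_II by (auto simp: II_def Iset_def Jl_def JJ_def Jset_def)
  qed
  then show "II = insert zz Jl" by auto
  show "zz \<notin> Jl" by (simp add: Jl_def JJ_def Jset_def zz_def sum_list_replicate)
qed

lemma sum_zz0: "sum_list zz = 0" by (simp add: zz_def sum_list_replicate)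

lemma Wlt_eq: "Wlt h s = (\<Sum>i\<in>Jl. sum_list i)"
proof -
  have "Wlt h s = (\<Sum>i\<in>II. sum_list i)" by (simp add: Wlt_def II_def Iset_def)
  also have "\<dots> = (\<Sum>i\<in>Jl. sum_list i)" unfolding II_split using zz_Jl finite_Jl sum_zz0 by simp
  finally show ?thesis .
qed

lemma Cle_set: "{j::nat list. length j = h \<and> sum_list j \<le> l} = II \<union> Jh" and II_Jh: "II \<inter> Jh = {}"
  using sl s1 by (auto simp: II_def Iset_def Jh_def JJ_def Jset_def)

lemma Clt_eq: "Clt h s = card II" by (simp add: Clt_def II_def Iset_def)
lemma Cle_eq: "Cle h l = card II + card Jh"
  unfolding Cle_def Cle_set using II_Jh finite_II finite_Jh by (simp add: card_Un_disjoint)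
lemma Wle_eq: "Wle h l = (\<Sum>i\<in>II. sum_list i) + (\<Sum>j\<in>Jh. sum_list j)"
  unfolding Wle_def Cle_set using II_Jh finite_II finite_Jh by (simp add: sum.union_disjoint)

definition "NU = (\<Sum>i\<in>II. card (Wt q (bl i))) + (\<Sum>j\<in>Jh. card (Wt q (bp j)))"
definition "NC = card GapS + s * q^2 * (card Jh * q)"

lemma NU_ge: "int NU \<ge> (\<Sum>i\<in>II. int t + int (sum_list i) * int ee + 1 - int gg) - 1
                   + (\<Sum>j\<in>Jh. int t + int (sum_list j) * int MM + 1 - int gg)"
proof -
  have a: "int (card (Wt q m)) \<ge> int m + 1 - int gg" for m
    using card_Wt_lower[OF q1, of m] by (simp add: gg_def)
  have blI: "int (bl i) = int t + int (sum_list i) * int ee - (if i = zz then 1 else 0)" for i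
    using t1 by (simp add: bl_def)
  have "(\<Sum>i\<in>II. int (card (Wt q (bl i)))) \<ge> (\<Sum>i\<in>II. int (bl i) + 1 - int gg)"
    by (intro sum_mono a)
  moreover have "(\<Sum>i\<in>II. int (bl i) + 1 - int gg) = (\<Sum>i\<in>II. (int t + int (sum_list i) * int ee + 1 - int gg) - (if i = zz then 1 else 0))"
    by (rule sum.cong) (simp_all add: blI)
  moreover have "\<dots> = (\<Sum>i\<in>II. int t + int (sum_list i) * int ee + 1 - int gg) - (\<Sum>i\<in>II. (if i = zz then 1 else 0))"
    by (rule sum_subtractf)
  moreover have "(\<Sum>i\<in>II. (if i = zz then 1 else 0) :: int) = 1" using zz_II finite_II by (simp add: sum.delta)
  moreover have "(\<Sum>j\<in>Jh. int (card (Wt q (bp j)))) \<ge> (\<Sum>j\<in>Jh. int (bp j) + 1 - int gg)"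
    by (intro sum_mono a)
  moreover have "(\<Sum>j\<in>Jh. int (bp j) + 1 - int gg) = (\<Sum>j\<in>Jh. int t + int (sum_list j) * int MM + 1 - int gg)"
    by (simp add: bp_def)
  ultimately show ?thesis unfolding NU_def by (simp add: of_nat_sum)
qed

lemma NC_le: "int NC \<le> (int (q^3) + int ee - int MM) * int (Wlt h s) + int (q^3) * int s * int (card Jh)"
proof -
  have "int (card GapS) \<le> int (\<Sum>j\<in>Jl. sum_list j * (q^3 + ee - MM))" using card_GapS by (simp only: of_nat_le_iff)
  also have "\<dots> = (\<Sum>j\<in>Jl. int (sum_list j) * (int (q^3) + int ee - int MM))"
    using MM_lt by (simp add: of_nat_sum of_nat_diff)
  also have "\<dots> = (int (q^3) + int ee - int MM) * int (Wlt h s)"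
    by (simp add: Wlt_eq of_nat_sum sum_distrib_right mult.commute)
  finally show ?thesis unfolding NC_def by (simp add: power2_eq_square power3_eq_cube algebra_simps)
qed

lemma delta_le: "deltaH q h s l mH t - 1 \<le> int NU - int NC"
proof -
  have d: "deltaH q h s l mH t = (int t + 1 - int gg) * (int (card II) + int (card Jh))
     - int (q^3) * int (Wlt h s) - int (q^3) * int s * int (card Jh)
     + int MM * int (Wlt h s) + int MM * (\<Sum>j\<in>Jh. int (sum_list j))"
  proof -
    have w: "int (Wle h l) = int (Wlt h s) + (\<Sum>j\<in>Jh. int (sum_list j))"
      using Wle_eq by (simp add: Wlt_def II_def Iset_def of_nat_sum)
    show ?thesis unfolding deltaH_def Cle_eq Clt_eq using w MM_int
      by (simp add: gg_def algebra_simps)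
  qed
  have s1': "(\<Sum>i\<in>II. int t + int (sum_list i) * int ee + 1 - int gg) = (int t + 1 - int gg) * int (card II) + int ee * int (Wlt h s)"
  proof -
    have "(\<Sum>i\<in>II. int t + int (sum_list i) * int ee + 1 - int gg) = (\<Sum>i\<in>II. (int t + 1 - int gg) + int ee * int (sum_list i))"
      by (simp add: algebra_simps)
    also have "\<dots> = (int t + 1 - int gg) * int (card II) + int ee * (\<Sum>i\<in>II. int (sum_list i))"
      by (simp add: sum.distrib sum_distrib_left)
    also have "(\<Sum>i\<in>II. int (sum_list i)) = int (Wlt h s)" by (simp add: Wlt_def II_def Iset_def of_nat_sum)
    finally show ?thesis .
  qed
  have s2': "(\<Sum>j\<in>Jh. int t + int (sum_list j) * int MM + 1 - int gg) = (int t + 1 - int gg) * int (card Jh) + int MM * (\<Sum>j\<in>Jh. int (sum_list j))"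
  proof -
    have "(\<Sum>j\<in>Jh. int t + int (sum_list j) * int MM + 1 - int gg) = (\<Sum>j\<in>Jh. (int t + 1 - int gg) + int MM * int (sum_list j))"
      by (simp add: algebra_simps)
    also have "\<dots> = (int t + 1 - int gg) * int (card Jh) + int MM * (\<Sum>j\<in>Jh. int (sum_list j))"
      by (simp add: sum.distrib sum_distrib_left)
    finally show ?thesis .
  qed
  show ?thesis using NU_ge NC_le d s1' s2' by (simp add: algebra_simps)
qed

theorem main_count:
  assumes ne: "Sol \<noteq> {}"
  shows "real (card Sol) \<ge> real (q ^ 2) powi (deltaH q h s l mH t - 1)"
proof -
  obtain L0 P0 where S0: "(L0, P0) \<in> Sol" using ne by auto
  have c1: "card UU \<le> card CC * card ZZ"
    by (rule fiber_count[OF finite_UU finite_CC Phi_CC finite_ZZ dz dinj])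
  have c2: "card ZZ \<le> card Sol"
  proof (rule card_inj_on_le)
    show "inj_on (Tm L0 P0) ZZ" by (rule inj_on_subset[OF Tm_inj ZZ_sub])
    show "Tm L0 P0 ` ZZ \<subseteq> Sol" using Tm_Sol[OF S0] by blast
    show "finite Sol" by (rule finite_Sol)
  qed
  have "(q^2) ^ NU \<le> (q^2) ^ NC * card Sol"
  proof -
    have "(q^2) ^ NU = card UU" using card_UU by (simp add: NU_def)
    also have "\<dots> \<le> card CC * card Sol" using c1 c2 by (meson le_trans mult_le_mono2)
    also have "\<dots> \<le> (q^2) ^ NC * card Sol"
      using card_CC by (intro mult_right_mono) (simp_all add: NC_def power_add power_mult)
    finally show ?thesis .
  qed
  hence r: "real (q^2) ^ NU \<le> real (q^2) ^ NC * real (card Sol)"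
    by (metis of_nat_le_iff of_nat_mult of_nat_power)
  define Q where "Q = real (q^2)"
  have Qpos: "Q > 0" "Q \<ge> 1" using q1 by (simp_all add: Q_def)
  have "Q powi (int NU - int NC) = Q ^ NU / Q ^ NC"
    using Qpos by (simp add: power_int_diff)
  also have "\<dots> \<le> real (card Sol)" using r Qpos by (simp add: Q_def divide_le_eq mult.commute)
  finally have A: "Q powi (int NU - int NC) \<le> real (card Sol)" .
  have "Q powi (deltaH q h s l mH t - 1) \<le> Q powi (int NU - int NC)"
    by (rule power_int_increasing[OF delta_le Qpos(2)])
  with A show ?thesis by (simp add: Q_def)
qed

end

theorem lemma6:
  fixes q h s l \<tau> :: nat and mH :: int
    and Rv :: "nat \<Rightarrow> 'a::{field,finite} poly poly"
    and Pt :: "nat \<Rightarrow> 'a \<times> 'a" and r :: "nat \<Rightarrow> nat \<Rightarrow> 'a"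
  assumes q_pp: "\<exists>p k. prime p \<and> k \<ge> 1 \<and> q = p ^ k"
    and card_F: "card (UNIV :: 'a set) = q ^ 2"
    and h_pos: "h \<ge> 1"
    and mH_lo: "2 * (int (genusH q) - 1) < mH" and mH_hi: "mH < int (q ^ 3)"
    and pts: "bij_betw Pt {1..q ^ 3} (hermitian_points q)"
    and R_in: "\<forall>\<mu> < h. inR q (Rv \<mu>)"
    and R_deg: "\<forall>\<mu> < h. Rv \<mu> \<noteq> 0 \<longrightarrow> degH q (Rv \<mu>) < q ^ 3 + 2 * genusH q"
    and R_interp: "\<forall>\<mu> < h. \<forall>j \<in> {1..q ^ 3}.
                     evalR (Rv \<mu>) (fst (Pt j)) (snd (Pt j)) = r \<mu> j"
    and params: "\<tau> \<ge> 1" "l \<ge> 1" "s \<ge> 1" "s \<le> l"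
    and bound: "int \<tau> + int l * mH < int s * int (q ^ 3)"
    and exists: "solutions_of_degree q h s l mH Rv \<tau> \<noteq> {}"
  shows "real (card (solutions_of_degree q h s l mH Rv \<tau>))
           \<ge> real (q ^ 2) powi (deltaH q h s l mH \<tau> - 1)"
  proof -
  obtain p k where pk: "prime p" "k \<ge> 1" "q = p ^ k" using q_pp by blast
  have "p \<ge> 2" using pk(1) by (rule prime_ge_2_nat)
  moreover have "p \<le> p ^ k" using pk(2) \<open>p \<ge> 2\<close> by (simp add: self_le_power)
  ultimately have q2: "q \<ge> 2" using pk(3) by linarith
  interpret H: hsetup q h s l \<tau> mH Rv
    by unfold_locales (use q2 card_F mH_lo mH_hi R_in R_deg params in auto)
  show ?thesis using H.main_count exists by (simp add: H.Sol_def)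
qed

end
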